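(* Let $A$ be a real random variable with $\mathbb{E}[A]=0$ and $\mathbb{E}[A^2]=1$, and let $B$ be a real random variable independent of $A$ with continuously differentiable probability density function $f_B$. Let $\delta>0$ be such that $c=\sup_{s\in(-\delta,\delta)}\max\{|f_B(s)|,|f_B'(s)|\}$ is finite. Then for every $n\ge1$, $$\Big|\Pr\big[B\ge A/\sqrt n\big]-\Pr[B\ge0]\Big|\le\frac1n\Big(\frac{2}{\delta^2}+\frac{c}{\delta}+\frac c2\Big).$$ *)

theory Defs
  imports "HOL-Probability.Probability"
begin

end

theory Submission imports Defs begin

lemma taylor_bound:
  fixes H f :: "real \<Rightarrow> real" and c \<delta> t :: real
  assumes H0: "H 0 = 0" and dH: "\<And>x. (H has_real_derivative f x) (at x)"
    and df: "\<And>x. f differentiable (at x)"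
    and H1: "\<And>x. \<bar>H x\<bar> \<le> 1"
    and cb: "\<And>s. \<bar>s\<bar> < \<delta> \<Longrightarrow> \<bar>f s\<bar> \<le> c \<and> \<bar>deriv f s\<bar> \<le> c"
    and d: "\<delta> > 0"
  shows "\<bar>f 0 * t - H t\<bar> \<le> t\<^sup>2 * (1/\<delta>\<^sup>2 + c/\<delta> + c/2)"
proof -
  have c0: "c \<ge> 0" using cb[of 0] d by auto
  have f0: "\<bar>f 0\<bar> \<le> c" using cb[of 0] d by auto
  show ?thesis
  proof (cases "\<bar>t\<bar> < \<delta>")
    case True
    define diff :: "nat \<Rightarrow> real \<Rightarrow> real" where "diff = (\<lambda>m. if m = 0 then H else if m = 1 then f else deriv f)"
    have "\<exists>s. \<bar>s\<bar> \<le> \<bar>t\<bar> \<and> H t = (\<Sum>m<2. diff m 0 / (fact m) * t ^ m) + diff 2 s / (fact 2) * t ^ 2"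
    proof (rule Maclaurin_bi_le)
      show "diff 0 = H" by (simp add: diff_def)
      show "\<forall>m s. m < 2 \<and> \<bar>s\<bar> \<le> \<bar>t\<bar> \<longrightarrow> DERIV (diff m) s :> diff (Suc m) s"
      proof (intro allI impI)
        fix m s assume "m < (2::nat) \<and> \<bar>s\<bar> \<le> \<bar>t\<bar>"
        then have "m = 0 \<or> m = 1" by auto
        then show "DERIV (diff m) s :> diff (Suc m) s"
          using dH df DERIV_deriv_iff_real_differentiable by (auto simp: diff_def)
      qed
    qed
    then obtain s where s: "\<bar>s\<bar> \<le> \<bar>t\<bar>" and eq: "H t = (\<Sum>m<2. diff m 0 / (fact m) * t ^ m) + diff 2 s / (fact 2) * t ^ 2"
      by blast
    have eq2: "H t = f 0 * t + deriv f s / 2 * t\<^sup>2"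
      using eq H0 by (simp add: diff_def numeral_2_eq_2 lessThan_Suc)
    have "\<bar>deriv f s\<bar> \<le> c" using cb[of s] s True by auto
    then have "\<bar>f 0 * t - H t\<bar> \<le> c / 2 * t\<^sup>2"
      using eq2 by (simp add: abs_mult mult_right_mono)
    also have "\<dots> \<le> t\<^sup>2 * (1/\<delta>\<^sup>2 + c/\<delta> + c/2)"
      using c0 d by (simp add: algebra_simps)
    finally show ?thesis .
  next
    case False
    then have tg: "\<bar>t\<bar> \<ge> \<delta>" by simp
    have a: "1 \<le> t\<^sup>2 / \<delta>\<^sup>2"
    proof -
      have "\<delta>\<^sup>2 \<le> t\<^sup>2" using tg d by (metis abs_of_pos power2_abs power_mono less_imp_le)
      then show ?thesis using d by simp
    qed
    have b: "\<bar>t\<bar> \<le> t\<^sup>2 / \<delta>"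
    proof -
      have "\<delta> * \<bar>t\<bar> \<le> \<bar>t\<bar> * \<bar>t\<bar>" using tg by (metis abs_ge_zero mult_right_mono)
      then show ?thesis using d by (simp add: field_simps power2_eq_square abs_mult_self)
    qed
    have "\<bar>f 0 * t - H t\<bar> \<le> c * \<bar>t\<bar> + 1"
    proof -
      have "\<bar>f 0 * t\<bar> \<le> c * \<bar>t\<bar>" using f0 by (simp add: abs_mult mult_right_mono)
      then show ?thesis using H1[of t] by linarith
    qed
    also have "\<dots> \<le> c * (t\<^sup>2 / \<delta>) + t\<^sup>2 / \<delta>\<^sup>2"
      using a b c0 by (smt (verit) mult_left_mono)
    also have "\<dots> \<le> t\<^sup>2 * (1/\<delta>\<^sup>2 + c/\<delta> + c/2)"
      using c0 by (simp add: algebra_simps)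
    finally show ?thesis .
  qed
qed


theorem lemma5:
  fixes M :: "'a measure" and A B :: "'a \<Rightarrow> real" and f :: "real \<Rightarrow> real"
    and \<delta> :: real and n :: nat
  assumes "prob_space M"
    and "A \<in> borel_measurable M" and "B \<in> borel_measurable M"
    and "integrable M A" and "integrable M (\<lambda>x. (A x)\<^sup>2)"
    and "prob_space.expectation M A = 0"
    and "prob_space.expectation M (\<lambda>x. (A x)\<^sup>2) = 1"
    and "prob_space.indep_var M borel A borel B"
    and "\<And>x. f x \<ge> 0"
    and "distributed M lborel B (\<lambda>x. ennreal (f x))"
    and "\<And>x. f differentiable (at x)" and "continuous_on UNIV (deriv f)"
    and "\<delta> > 0"
    and "bdd_above ((\<lambda>s. max \<bar>f s\<bar> \<bar>deriv f s\<bar>) ` {-\<delta><..<\<delta>})"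
    and "n \<ge> 1"
  shows "\<bar>measure M {x \<in> space M. B x \<ge> A x / sqrt (real n)} - measure M {x \<in> space M. B x \<ge> 0}\<bar>
    \<le> (1 / real n) * (2 / \<delta>\<^sup>2 + (SUP s\<in>{-\<delta><..<\<delta>}. max \<bar>f s\<bar> \<bar>deriv f s\<bar>) / \<delta>
        + (SUP s\<in>{-\<delta><..<\<delta>}. max \<bar>f s\<bar> \<bar>deriv f s\<bar>) / 2)"
proof -
  interpret P: prob_space M by fact
  define c where "c = (SUP s\<in>{-\<delta><..<\<delta>}. max \<bar>f s\<bar> \<bar>deriv f s\<bar>)"
  have cb: "\<And>s. \<bar>s\<bar> < \<delta> \<Longrightarrow> \<bar>f s\<bar> \<le> c \<and> \<bar>deriv f s\<bar> \<le> c"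
  proof -
    fix s :: real assume "\<bar>s\<bar> < \<delta>"
    then have "s \<in> {-\<delta><..<\<delta>}" by auto
    then have "max \<bar>f s\<bar> \<bar>deriv f s\<bar> \<le> c" unfolding c_def using assms(14) by (rule cSUP_upper)
    then show "\<bar>f s\<bar> \<le> c \<and> \<bar>deriv f s\<bar> \<le> c" by simp
  qed
  have contf: "continuous_on UNIV f"
    by (intro continuous_at_imp_continuous_on ballI differentiable_imp_continuous_within assms(11))
  have fmeas[measurable]: "f \<in> borel_measurable borel" by (rule borel_measurable_continuous_onI[OF contf])
  have Bm[measurable]: "B \<in> borel_measurable M" by fact
  have Am[measurable]: "A \<in> borel_measurable M" by fact
  define F where "F t = measure M {x\<in>space M. t \<le> B x}" for t
  define H where "H t = (LBINT y=ereal 0..ereal t. f y)" for t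
  have int_meas: "\<And>a b. a \<le> b \<Longrightarrow> measure M {x\<in>space M. a \<le> B x \<and> B x < b} = (LBINT y=ereal a..ereal b. f y)"
  proof -
    fix a b :: real assume ab: "a \<le> b"
    have "emeasure M (B -` {a..<b} \<inter> space M) = (\<integral>\<^sup>+y. ennreal (f y) * indicator {a..<b} y \<partial>lborel)"
      using distributed_emeasure[OF assms(10)] by simp
    also have "\<dots> = (\<integral>\<^sup>+y. ennreal (f y * indicator {a..<b} y) \<partial>lborel)"
      by (intro nn_integral_cong) (auto simp: indicator_def)
    finally have e: "emeasure M (B -` {a..<b} \<inter> space M) = (\<integral>\<^sup>+y. ennreal (f y * indicator {a..<b} y) \<partial>lborel)" .
    have "(LBINT y=ereal a..ereal b. f y) = (LBINT y:{a..<b}. f y)" using interval_integral_Ico[OF ab] .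
    also have "\<dots> = integral\<^sup>L lborel (\<lambda>y. f y * indicator {a..<b} y)"
      by (simp add: set_lebesgue_integral_def mult.commute)
    also have "\<dots> = enn2real (\<integral>\<^sup>+y. ennreal (f y * indicator {a..<b} y) \<partial>lborel)"
      by (rule integral_eq_nn_integral) (auto simp: assms(9))
    also have "\<dots> = measure M (B -` {a..<b} \<inter> space M)" using e by (simp add: measure_def)
    also have "B -` {a..<b} \<inter> space M = {x\<in>space M. a \<le> B x \<and> B x < b}" by auto
    finally show "measure M {x\<in>space M. a \<le> B x \<and> B x < b} = (LBINT y=ereal a..ereal b. f y)" by simp
  qed
  have ev: "\<And>t. {x\<in>space M. t \<le> B x} \<in> sets M" by measurable
  have FH: "\<And>t. F t = F 0 - H t"
  proof -
    fix t :: real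
    show "F t = F 0 - H t"
    proof (cases "0 \<le> t")
      case True
      have eq: "{x\<in>space M. 0 \<le> B x \<and> B x < t} = {x\<in>space M. 0 \<le> B x} - {x\<in>space M. t \<le> B x}" by auto
      have sub: "{x\<in>space M. t \<le> B x} \<subseteq> {x\<in>space M. 0 \<le> B x}" using True by auto
      have m: "measure M {x\<in>space M. 0 \<le> B x \<and> B x < t} = F 0 - F t"
        unfolding F_def eq by (rule P.finite_measure_Diff[OF ev ev sub])
      show ?thesis using m int_meas[OF True] unfolding H_def by linarith
    next
      case False
      then have le: "t \<le> 0" by simp
      have eq: "{x\<in>space M. t \<le> B x \<and> B x < 0} = {x\<in>space M. t \<le> B x} - {x\<in>space M. 0 \<le> B x}" by auto
      have sub: "{x\<in>space M. 0 \<le> B x} \<subseteq> {x\<in>space M. t \<le> B x}" using le by auto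
      have m: "measure M {x\<in>space M. t \<le> B x \<and> B x < 0} = F t - F 0"
        unfolding F_def eq by (rule P.finite_measure_Diff[OF ev ev sub])
      have h: "H t = - (LBINT y=ereal t..ereal 0. f y)"
        unfolding H_def by (rule interval_integral_endpoints_reverse)
      show ?thesis using m h int_meas[OF le] by linarith
    qed
  qed
  have F01: "\<And>t. 0 \<le> F t \<and> F t \<le> 1" unfolding F_def by simp
  have H1: "\<And>t. \<bar>H t\<bar> \<le> 1" using FH F01 by (smt (verit))
  have H0: "H 0 = 0" unfolding H_def by (simp add: interval_lebesgue_integral_def einterval_same set_lebesgue_integral_def)
  have dH: "\<And>x. (H has_real_derivative f x) (at x)"
  proof -
    fix x :: real
    have "(at x within {min 0 (x - 1)..max 0 (x + 1)}) = at x" by (intro at_within_interior) auto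
    moreover have "min 0 (x - 1) \<le> x" "x \<le> max 0 (x + 1)" by auto
    ultimately show "(H has_real_derivative f x) (at x)"
      using interval_integral_FTC2[of "min 0 (x - 1)" 0 "max 0 (x + 1)" f x] continuous_on_subset[OF contf]
      unfolding has_real_derivative_iff_has_vector_derivative H_def[abs_def] by auto
  qed
  have contH: "continuous_on UNIV H"
    using dH by (intro continuous_at_imp_continuous_on ballI) (auto intro: DERIV_isCont)
  have Hmeas[measurable]: "H \<in> borel_measurable borel" by (rule borel_measurable_continuous_onI[OF contH])
  have Feq: "F = (\<lambda>t. F 0 - H t)" by (rule ext) (rule FH)
  have Fmeas[measurable]: "F \<in> borel_measurable borel" by (subst Feq) measurable
  define s where "s = sqrt (real n)"
  have s0: "s > 0" using assms(15) by (simp add: s_def)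
  have ss: "s\<^sup>2 = real n" by (simp add: s_def)
  have indep: "distr M borel A \<Otimes>\<^sub>M distr M borel B = distr M (borel \<Otimes>\<^sub>M borel) (\<lambda>x. (A x, B x))"
    using assms(8) P.indep_var_distribution_eq by blast
  let ?S = "{p::real\<times>real. fst p / s \<le> snd p}"
  have Sm: "?S \<in> sets (borel \<Otimes>\<^sub>M borel)"
  proof -
    have "{p::real\<times>real. fst p / s \<le> snd p} \<in> sets borel"
      using s0 by (intro borel_closed closed_Collect_le continuous_intros) auto
    then show ?thesis unfolding borel_prod by simp
  qed
  interpret PB: prob_space "distr M borel B" by (rule P.prob_space_distr) simp
  have "emeasure M {x\<in>space M. A x / s \<le> B x} = emeasure (distr M (borel \<Otimes>\<^sub>M borel) (\<lambda>x. (A x, B x))) ?S"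
    by (subst emeasure_distr[OF _ Sm]) (auto intro!: arg_cong[where f="emeasure M"])
  also have "\<dots> = emeasure (distr M borel A \<Otimes>\<^sub>M distr M borel B) ?S" by (simp add: indep)
  also have "\<dots> = (\<integral>\<^sup>+a. emeasure (distr M borel B) (Pair a -` ?S) \<partial>distr M borel A)"
    by (rule PB.emeasure_pair_measure_alt) (use Sm in simp)
  also have "\<dots> = (\<integral>\<^sup>+a. ennreal (F (a / s)) \<partial>distr M borel A)"
  proof (intro nn_integral_cong)
    fix a :: real
    have "Pair a -` ?S = {b. a/s \<le> b}" by (auto simp: space_pair_measure)
    then have "emeasure (distr M borel B) (Pair a -` ?S) = emeasure M {x\<in>space M. a/s \<le> B x}"
      by (subst emeasure_distr) (auto intro!: arg_cong[where f="emeasure M"])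
    then show "emeasure (distr M borel B) (Pair a -` ?S) = ennreal (F (a / s))"
      by (simp add: F_def P.emeasure_eq_measure)
  qed
  also have "\<dots> = (\<integral>\<^sup>+x. ennreal (F (A x / s)) \<partial>M)" by (subst nn_integral_distr) auto
  finally have e1: "emeasure M {x\<in>space M. A x / s \<le> B x} = (\<integral>\<^sup>+x. ennreal (F (A x / s)) \<partial>M)" .
  have m1: "measure M {x\<in>space M. A x / s \<le> B x} = (\<integral>x. F (A x / s) \<partial>M)"
    using e1 by (simp add: measure_def integral_eq_nn_integral F01)
  define K where "K = 1/\<delta>\<^sup>2 + c/\<delta> + c/2"
  have tint: "integrable M (\<lambda>x. A x / s)" using assms(4) by simp
  have tE: "(\<integral>x. A x / s \<partial>M) = 0" using assms(6) by simp
  have Hint: "integrable M (\<lambda>x. H (A x / s))"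
    by (rule P.integrable_const_bound[where B=1]) (auto simp: H1)
  define g where "g x = f 0 * (A x / s) - H (A x / s)" for x
  have gint: "integrable M g" unfolding g_def
    by (intro Bochner_Integration.integrable_diff integrable_mult_right tint Hint)
  have "(\<integral>x. F (A x / s) \<partial>M) = (\<integral>x. F 0 - H (A x / s) \<partial>M)"
    by (rule Bochner_Integration.integral_cong[OF refl]) (rule FH)
  also have "\<dots> = F 0 - (\<integral>x. H (A x / s) \<partial>M)"
    using Hint by (simp add: P.prob_space)
  finally have i1: "(\<integral>x. F (A x / s) \<partial>M) = F 0 - (\<integral>x. H (A x / s) \<partial>M)" .
  have i2: "(\<integral>x. g x \<partial>M) = f 0 * (\<integral>x. A x / s \<partial>M) - (\<integral>x. H (A x / s) \<partial>M)"
  proof -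
    have "(\<integral>x. g x \<partial>M) = (\<integral>x. f 0 * (A x / s) \<partial>M) - (\<integral>x. H (A x / s) \<partial>M)"
      unfolding g_def by (intro Bochner_Integration.integral_diff integrable_mult_right tint Hint)
    also have "(\<integral>x. f 0 * (A x / s) \<partial>M) = f 0 * (\<integral>x. A x / s \<partial>M)" by (rule integral_mult_right_zero)
    finally show ?thesis .
  qed
  have D: "measure M {x\<in>space M. A x / s \<le> B x} - F 0 = (\<integral>x. g x \<partial>M)"
    using m1 i1 i2 tE by simp
  have pw: "\<And>x. \<bar>g x\<bar> \<le> K / real n * (A x)\<^sup>2"
  proof -
    fix x
    have "\<bar>g x\<bar> \<le> (A x / s)\<^sup>2 * K"
      unfolding g_def K_def by (rule taylor_bound[OF H0 dH assms(11) H1 cb assms(13)])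
    also have "(A x / s)\<^sup>2 = (A x)\<^sup>2 / real n" by (simp add: power_divide ss)
    finally show "\<bar>g x\<bar> \<le> K / real n * (A x)\<^sup>2" by (simp add: field_simps)
  qed
  have Aint: "integrable M (\<lambda>x. K / real n * (A x)\<^sup>2)" by (intro integrable_mult_right assms(5))
  have "\<bar>\<integral>x. g x \<partial>M\<bar> \<le> (\<integral>x. \<bar>g x\<bar> \<partial>M)" by (rule integral_abs_bound)
  also have "\<dots> \<le> (\<integral>x. K / real n * (A x)\<^sup>2 \<partial>M)"
    by (rule integral_mono[OF _ Aint]) (use gint pw in auto)
  also have "\<dots> = K / real n" using assms(7) by simp
  finally have main: "\<bar>measure M {x\<in>space M. A x / s \<le> B x} - F 0\<bar> \<le> K / real n" using D by simp
  have c0: "c \<ge> 0" using cb[of 0] assms(13) by auto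
  have "K / real n \<le> (1 / real n) * (2 / \<delta>\<^sup>2 + c / \<delta> + c / 2)"
    unfolding K_def using assms(13) assms(15) by (simp add: divide_right_mono field_simps)
  with main show ?thesis unfolding s_def F_def c_def by simp
qed

end
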